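(* Let $X$ be a compact metric space of negative type. A probability measure $\mu\in\mathscr{P}(X)$ is diversity-maximizing if and only if there is a constant $C>0$ such that $Z\mu(x)=C$ for all $x\in\operatorname{supp}\mu$ and $Z\mu(x)\ge C$ for all $x\in X$. In that case $C=1/|X|_+$.
   Context: Let $(X,d)$ be a compact metric space, $Z(x,y)=e^{-d(x,y)}$, $\mathscr{P}(X)$ the Borel probability measures on $X$, $Z\mu(x)=\int_X Z(x,y)\,\mu(dy)$, $\langle\mu,\nu\rangle_{\mathscr{W}}=\int_X Z\mu\,d\nu$. Maximum diversity: $|X|_+=\sup_{\mu\in\mathscr{P}(X)}1/\langle\mu,\mu\rangle_{\mathscr{W}}$; a diversity-maximizing measure is a $\mu\in\mathscr{P}(X)$ attaining this supremum. $X$ is of negative type if $(X,\sqrt d)$ embeds isometrically into a Hilbert space. $\operatorname{supp}\mu$ denotes the (closed) support of $\mu$. *)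

theory Defs
  imports "HOL-Probability.Probability"
begin

definition borel_prob_measures :: "'a::metric_space set \<Rightarrow> 'a measure set" where
  "borel_prob_measures X = {M. sets M = sets (restrict_space borel X) \<and> prob_space M}"

definition Zmu :: "'a::metric_space measure \<Rightarrow> 'a \<Rightarrow> real" where
  "Zmu M x = (\<integral>y. exp (- dist x y) \<partial>M)"

definition W_inner :: "'a::metric_space measure \<Rightarrow> 'a measure \<Rightarrow> real" where
  "W_inner M N = (\<integral>x. Zmu M x \<partial>N)"

definition max_diversity :: "'a::metric_space set \<Rightarrow> real" where
  "max_diversity X = (SUP M \<in> borel_prob_measures X. 1 / W_inner M M)"

definition diversity_maximizing :: "'a::metric_space set \<Rightarrow> 'a measure \<Rightarrow> bool" where
  "diversity_maximizing X M \<longleftrightarrow>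
     M \<in> borel_prob_measures X \<and> 1 / W_inner M M = max_diversity X"

definition msupp :: "'a::topological_space measure \<Rightarrow> 'a set" where
  "msupp M = {x \<in> space M. \<forall>U. open U \<and> x \<in> U \<longrightarrow> emeasure M (U \<inter> space M) > 0}"

definition sqrt_isometric_embedding ::
    "'a::metric_space set \<Rightarrow> ('a \<Rightarrow> 'b::{real_inner,complete_space}) \<Rightarrow> bool" where
  "sqrt_isometric_embedding X f \<longleftrightarrow> (\<forall>x\<in>X. \<forall>y\<in>X. dist (f x) (f y) = sqrt (dist x y))"

end

theory Submission
  imports Defs
begin


definition psd :: "nat \<Rightarrow> (nat \<Rightarrow> nat \<Rightarrow> real) \<Rightarrow> bool" where
  "psd m A \<longleftrightarrow> (\<forall>c. 0 \<le> (\<Sum>i<m. \<Sum>j<m. c i * c j * A i j))"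

lemma psd_schur_aux:
  fixes v :: "nat \<Rightarrow> 'b::real_inner"
  assumes A: "psd m A"
  shows "card {i. i < m \<and> v i \<noteq> 0} = n \<Longrightarrow> psd m (\<lambda>i j. A i j * (v i \<bullet> v j))"
proof (induction n arbitrary: v rule: less_induct)
  case (less n)
  show ?case
  proof (cases "\<exists>k<m. v k \<noteq> 0")
    case False
    then have "\<forall>i<m. v i = 0" by blast
    then show ?thesis unfolding psd_def by simp
  next
    case True
    then obtain k where k: "k < m" "v k \<noteq> 0" by blast
    define q where "q = v k /\<^sub>R norm (v k)"
    have qq: "q \<bullet> q = 1" using k by (simp add: q_def inner_commute power2_norm_eq_inner[symmetric] power2_eq_square)
    define a where "a i = v i \<bullet> q" for i
    define r where "r i = v i - a i *\<^sub>R q" for i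
    have rq: "r i \<bullet> q = 0" for i by (simp add: r_def a_def inner_diff_left qq)
    have vv: "v i \<bullet> v j = a i * a j + r i \<bullet> r j" for i j
    proof -
      have "v i = a i *\<^sub>R q + r i" "v j = a j *\<^sub>R q + r j" by (simp_all add: r_def)
      then have "v i \<bullet> v j = (a i *\<^sub>R q + r i) \<bullet> (a j *\<^sub>R q + r j)" by simp
      also have "\<dots> = a i * a j * (q \<bullet> q) + a i * (q \<bullet> r j) + a j * (r i \<bullet> q) + r i \<bullet> r j"
        by (simp add: inner_add_left inner_add_right algebra_simps)
      finally show ?thesis using qq rq[of i] rq[of j] by (simp add: inner_commute)
    qed
    have sub: "{i. i < m \<and> r i \<noteq> 0} \<subset> {i. i < m \<and> v i \<noteq> 0}"
    proof -
      have "r k = 0"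
      proof -
        have "a k = norm (v k)" using k by (simp add: a_def q_def power2_norm_eq_inner[symmetric] power2_eq_square)
        then show ?thesis using k by (simp add: r_def q_def)
      qed
      moreover have "v i = 0 \<Longrightarrow> r i = 0" for i by (simp add: r_def a_def)
      ultimately show ?thesis using k by auto
    qed
    then have "card {i. i < m \<and> r i \<noteq> 0} < n" using less.prems
      by (metis (no_types, lifting) finite_nat_set_iff_bounded mem_Collect_eq psubset_card_mono)
    from less.IH[OF this refl] have IH: "psd m (\<lambda>i j. A i j * (r i \<bullet> r j))" .
    show ?thesis unfolding psd_def
    proof
      fix c :: "nat \<Rightarrow> real"
      have "(\<Sum>i<m. \<Sum>j<m. c i * c j * (A i j * (v i \<bullet> v j)))
          = (\<Sum>i<m. \<Sum>j<m. (c i * a i) * (c j * a j) * A i j) + (\<Sum>i<m. \<Sum>j<m. c i * c j * (A i j * (r i \<bullet> r j)))"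
        by (simp add: vv sum.distrib[symmetric] algebra_simps)
      moreover have "0 \<le> (\<Sum>i<m. \<Sum>j<m. (c i * a i) * (c j * a j) * A i j)"
        using A unfolding psd_def by (rule allE[where x="\<lambda>i. c i * a i"]) simp
      moreover have "0 \<le> (\<Sum>i<m. \<Sum>j<m. c i * c j * (A i j * (r i \<bullet> r j)))"
        using IH unfolding psd_def by blast
      ultimately show "0 \<le> (\<Sum>i<m. \<Sum>j<m. c i * c j * (A i j * (v i \<bullet> v j)))" by linarith
    qed
  qed
qed

lemma psd_pow:
  fixes v :: "nat \<Rightarrow> 'b::real_inner"
  shows "psd m (\<lambda>i j. (v i \<bullet> v j) ^ n)"
proof (induction n)
  case 0
  show ?case unfolding psd_def
  proof
    fix c :: "nat \<Rightarrow> real"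
    have "(\<Sum>i<m. \<Sum>j<m. c i * c j * (v i \<bullet> v j) ^ 0) = (\<Sum>i<m. c i)^2"
      by (simp add: power2_eq_square sum_product)
    then show "0 \<le> (\<Sum>i<m. \<Sum>j<m. c i * c j * (v i \<bullet> v j) ^ 0)" by simp
  qed
next
  case (Suc n)
  from psd_schur_aux[OF Suc refl, of v] show ?case by (simp add: power_Suc2 mult.commute)
qed

lemma psd_exp:
  fixes v :: "nat \<Rightarrow> 'b::real_inner"
  shows "psd m (\<lambda>i j. exp (v i \<bullet> v j))"
  unfolding psd_def
proof
  fix c :: "nat \<Rightarrow> real"
  have s: "(\<lambda>n. \<Sum>i<m. \<Sum>j<m. c i * c j * ((v i \<bullet> v j)^n /\<^sub>R fact n))
      sums (\<Sum>i<m. \<Sum>j<m. c i * c j * exp (v i \<bullet> v j))"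
    by (intro sums_sum sums_mult exp_converges)
  have nn: "0 \<le> (\<Sum>i<m. \<Sum>j<m. c i * c j * ((v i \<bullet> v j)^n /\<^sub>R fact n))" for n
  proof -
    have "(\<Sum>i<m. \<Sum>j<m. c i * c j * ((v i \<bullet> v j)^n /\<^sub>R fact n))
       = (\<Sum>i<m. \<Sum>j<m. c i * c j * (v i \<bullet> v j)^n) / fact n"
      unfolding sum_divide_distrib by (intro sum.cong refl) (simp add: divide_inverse mult_ac)
    moreover have "0 \<le> (\<Sum>i<m. \<Sum>j<m. c i * c j * (v i \<bullet> v j)^n)"
      using psd_pow[of m v n] unfolding psd_def by blast
    ultimately show ?thesis by simp
  qed
  show "0 \<le> (\<Sum>i<m. \<Sum>j<m. c i * c j * exp (v i \<bullet> v j))"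
  proof -
    have "0 \<le> suminf (\<lambda>n. \<Sum>i<m. \<Sum>j<m. c i * c j * ((v i \<bullet> v j)^n /\<^sub>R fact n))"
      by (rule suminf_nonneg[OF sums_summable[OF s] nn])
    then show ?thesis using sums_unique[OF s] by simp
  qed
qed

lemma gauss_pd:
  fixes v :: "nat \<Rightarrow> 'b::real_inner"
  shows "0 \<le> (\<Sum>i<m. \<Sum>j<m. c i * c j * exp (- ((norm (v i - v j))^2)))"
proof -
  define d where "d i = c i * exp (- (v i \<bullet> v i))" for i
  define w where "w i = sqrt 2 *\<^sub>R v i" for i
  have e: "c i * c j * exp (- ((norm (v i - v j))^2)) = d i * d j * exp (w i \<bullet> w j)" for i j
  proof -
    have "(norm (v i - v j))^2 = v i \<bullet> v i + v j \<bullet> v j - 2 * (v i \<bullet> v j)"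
      by (simp add: power2_norm_eq_inner inner_diff_left inner_diff_right inner_commute)
    moreover have "w i \<bullet> w j = 2 * (v i \<bullet> v j)" by (simp add: w_def)
    ultimately have "- ((norm (v i - v j))^2) = - (v i \<bullet> v i) + - (v j \<bullet> v j) + w i \<bullet> w j"
      by simp
    then have "exp (- ((norm (v i - v j))^2)) = exp (- (v i \<bullet> v i)) * exp (- (v j \<bullet> v j)) * exp (w i \<bullet> w j)"
      by (simp only: exp_add)
    then show ?thesis by (simp add: d_def mult_ac)
  qed
  show ?thesis using psd_exp[of m w] unfolding psd_def by (simp add: e)
qed




lemma bpm_facts:
  assumes "M \<in> borel_prob_measures X"
  shows "prob_space M" "sets M = sets (restrict_space borel X)" "space M = X"
proof -
  show "prob_space M" "sets M = sets (restrict_space borel X)"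
    using assms by (auto simp: borel_prob_measures_def)
  then show "space M = X"
    by (metis sets_eq_imp_space_eq space_restrict_space space_borel Int_UNIV_right)
qed

lemma bpm_meas:
  assumes "M \<in> borel_prob_measures X" "continuous_on X g"
  shows "g \<in> borel_measurable M"
  unfolding measurable_cong_sets[OF bpm_facts(2)[OF assms(1)] refl]
  by (rule borel_measurable_continuous_on_restrict[OF assms(2)])

lemma bpm_int:
  fixes g :: "'a::metric_space \<Rightarrow> real"
  assumes "M \<in> borel_prob_measures X" "continuous_on X g" "\<And>y. y \<in> X \<Longrightarrow> \<bar>g y\<bar> \<le> B"
  shows "integrable M g"
proof -
  interpret prob_space M using bpm_facts[OF assms(1)] by simp
  show ?thesis
  proof (rule integrable_const_bound[where B=B])
    show "AE x in M. norm (g x) \<le> B"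
      by (rule AE_I2) (simp add: bpm_facts(3)[OF assms(1)] assms(3))
    show "g \<in> borel_measurable M" by (rule bpm_meas[OF assms(1,2)])
  qed
qed

lemma prob_int_le:
  fixes f :: "'a \<Rightarrow> real"
  assumes "prob_space M" "integrable M f" "\<And>y. y \<in> space M \<Longrightarrow> f y \<le> c"
  shows "integral\<^sup>L M f \<le> c"
proof -
  interpret prob_space M by (rule assms(1))
  have "integral\<^sup>L M f \<le> integral\<^sup>L M (\<lambda>y. c)"
    using assms by (intro integral_mono) auto
  also have "\<dots> = c" using assms(1) by (simp add: prob_space.prob_space)
  finally show ?thesis .
qed

lemma prob_int_ge:
  fixes f :: "'a \<Rightarrow> real"
  assumes "prob_space M" "integrable M f" "\<And>y. y \<in> space M \<Longrightarrow> c \<le> f y"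
  shows "c \<le> integral\<^sup>L M f"
proof -
  interpret prob_space M by (rule assms(1))
  have "integral\<^sup>L M (\<lambda>y. c) \<le> integral\<^sup>L M f"
    using assms by (intro integral_mono) auto
  moreover have "integral\<^sup>L M (\<lambda>y. c) = c" using prob_space by simp
  ultimately show ?thesis by linarith
qed

lemma exp_lip:
  fixes a b :: real
  assumes "0 \<le> a" "0 \<le> b"
  shows "\<bar>exp (- a) - exp (- b)\<bar> \<le> \<bar>a - b\<bar>"
proof -
  have *: "exp (- a) - exp (- b) \<le> b - a" if "a \<le> b" "0 \<le> a" for a b :: real
  proof -
    have ee: "exp (- a) * exp (-(b - a)) = exp (- b)" by (simp flip: exp_add)
    have "exp (- a) - exp (- b) = exp (- a) * (1 - exp (-(b - a)))"
      by (simp only: right_diff_distrib ee mult_1_right)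
    also have "\<dots> \<le> 1 * (1 - exp (-(b - a)))"
      using that by (intro mult_right_mono) auto
    also have "\<dots> \<le> b - a"
    proof -
      have "1 + (- (b - a)) \<le> exp (- (b - a))" by (rule exp_ge_add_one_self)
      then show ?thesis by (simp only: mult_1_left)
    qed
    finally show ?thesis .
  qed
  show ?thesis
  proof (cases "a \<le> b")
    case True
    with *[of a b] assms show ?thesis by auto
  next
    case False
    with *[of b a] assms show ?thesis by auto
  qed
qed

lemma K_lip: "\<bar>exp (- dist x y) - exp (- dist x' y)\<bar> \<le> dist x x'"
proof -
  have "\<bar>exp (- dist x y) - exp (- dist x' y)\<bar> \<le> \<bar>dist x y - dist x' y\<bar>"
    by (rule exp_lip) auto
  also have "\<dots> \<le> dist x x'"
    using dist_triangle[of x y x'] dist_triangle[of x' y x] dist_commute[of x x'] by (simp add: abs_le_iff)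
  finally show ?thesis .
qed

lemma K_cont: "continuous_on A (\<lambda>y. exp (- dist x y))"
  by (intro continuous_intros)

lemma K_int: "M \<in> borel_prob_measures X \<Longrightarrow> integrable M (\<lambda>y. exp (- dist x y))"
  by (rule bpm_int[where B=1]) (auto intro: K_cont)

lemma Zmu_lip:
  assumes "M \<in> borel_prob_measures X"
  shows "\<bar>Zmu M x - Zmu M x'\<bar> \<le> dist x x'"
proof -
  note P = bpm_facts[OF assms]
  have "Zmu M x - Zmu M x' = (\<integral>y. exp (- dist x y) - exp (- dist x' y) \<partial>M)"
    unfolding Zmu_def by (rule Bochner_Integration.integral_diff[symmetric]) (auto intro: K_int[OF assms])
  moreover have ii: "integrable M (\<lambda>y. exp (- dist x y) - exp (- dist x' y))"
    by (intro Bochner_Integration.integrable_diff K_int[OF assms])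
  moreover have "(\<integral>y. exp (- dist x y) - exp (- dist x' y) \<partial>M) \<le> dist x x'"
  proof (rule prob_int_le[OF P(1) ii])
    fix y show "exp (- dist x y) - exp (- dist x' y) \<le> dist x x'" using K_lip[of x y x'] by (simp add: abs_le_iff)
  qed
  moreover have "- dist x x' \<le> (\<integral>y. exp (- dist x y) - exp (- dist x' y) \<partial>M)"
  proof (rule prob_int_ge[OF P(1) ii])
    fix y show "- dist x x' \<le> exp (- dist x y) - exp (- dist x' y)" using K_lip[of x y x'] by (simp add: abs_le_iff)
  qed
  ultimately show ?thesis by linarith
qed

lemma Zmu_cont:
  assumes "M \<in> borel_prob_measures X"
  shows "continuous_on A (Zmu M)"
proof -
  have "lipschitz_on 1 A (Zmu M)"
    by (rule lipschitz_onI) (use Zmu_lip[OF assms] in \<open>auto simp: dist_real_def\<close>)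
  then show ?thesis by (rule lipschitz_on_continuous_on)
qed

lemma Zmu_bounds:
  assumes "M \<in> borel_prob_measures X"
  shows "0 \<le> Zmu M x" "Zmu M x \<le> 1"
  using prob_int_le[OF bpm_facts(1)[OF assms] K_int[OF assms, of x], of 1]
    prob_int_ge[OF bpm_facts(1)[OF assms] K_int[OF assms, of x], of 0]
  by (auto simp: Zmu_def)

lemma Zmu_lower:
  assumes "M \<in> borel_prob_measures X" "\<And>y. y \<in> X \<Longrightarrow> dist x y \<le> D"
  shows "exp (- D) \<le> Zmu M x"
  unfolding Zmu_def
  by (rule prob_int_ge[OF bpm_facts(1)[OF assms(1)] K_int[OF assms(1)]])
     (use assms(2) in \<open>auto simp: bpm_facts(3)[OF assms(1)]\<close>)

lemma Zmu_int:
  assumes "M \<in> borel_prob_measures X" "N \<in> borel_prob_measures X"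
  shows "integrable N (Zmu M)"
  by (rule bpm_int[OF assms(2), where B=1]) (use Zmu_bounds[OF assms(1)] Zmu_cont[OF assms(1)] in auto)

lemma W_bounds:
  assumes "M \<in> borel_prob_measures X" "N \<in> borel_prob_measures X"
    "\<And>x y. x \<in> X \<Longrightarrow> y \<in> X \<Longrightarrow> dist x y \<le> D"
  shows "exp (- D) \<le> W_inner M N" "W_inner M N \<le> 1"
  unfolding W_inner_def
  using prob_int_ge[OF bpm_facts(1)[OF assms(2)] Zmu_int[OF assms(1,2)], of "exp (-D)"]
    prob_int_le[OF bpm_facts(1)[OF assms(2)] Zmu_int[OF assms(1,2)], of 1]
    Zmu_lower[OF assms(1) assms(3)] Zmu_bounds[OF assms(1)]
  by (auto simp: bpm_facts(3)[OF assms(2)])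




lemma approx_sum:
  fixes g :: "'a \<Rightarrow> real"
  assumes P: "prob_space M" and A: "\<And>j. j < (m::nat) \<Longrightarrow> A j \<in> sets M"
    and S: "\<And>y. y \<in> space M \<Longrightarrow> (\<Sum>j<m. indicator (A j) y) = (1::real)"
    and E: "\<And>j y. j < m \<Longrightarrow> y \<in> A j \<Longrightarrow> \<bar>g y - g (p j)\<bar> \<le> e"
    and g: "g \<in> borel_measurable M" and B: "\<And>y. y \<in> space M \<Longrightarrow> \<bar>g y\<bar> \<le> B"
  shows "\<bar>integral\<^sup>L M g - (\<Sum>j<m. g (p j) * measure M (A j))\<bar> \<le> e"
proof -
  interpret prob_space M by (rule P)
  have Asub: "j < m \<Longrightarrow> A j \<subseteq> space M" for j using A sets.sets_into_space by blast
  have gi: "integrable M g"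
    by (rule integrable_const_bound[where B=B]) (auto intro!: AE_I2 g B)
  define F where "F y = (\<Sum>j<m. indicator (A j) y * (g y - g (p j)))" for y
  have Fm: "F \<in> borel_measurable M" unfolding F_def
    using A g by (intro borel_measurable_sum borel_measurable_times borel_measurable_diff
        borel_measurable_indicator) auto
  have Fb: "\<bar>F y\<bar> \<le> e" if y: "y \<in> space M" for y
  proof -
    have "\<bar>F y\<bar> \<le> (\<Sum>j<m. \<bar>indicator (A j) y * (g y - g (p j))\<bar>)"
      unfolding F_def by (rule sum_abs)
    also have "\<dots> \<le> (\<Sum>j<m. indicator (A j) y * e)"
      by (intro sum_mono) (auto simp: indicator_def abs_mult E)
    also have "\<dots> = e" using S[OF y] by (simp add: sum_distrib_right[symmetric])
    finally show ?thesis .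
  qed
  have Fi: "integrable M F"
    by (rule integrable_const_bound[where B=e]) (auto intro!: AE_I2 Fm Fb)
  have Fy: "F y = g y - (\<Sum>j<m. g (p j) * indicator (A j) y)" if y: "y \<in> space M" for y
  proof -
    have "F y = (\<Sum>j<m. indicator (A j) y * g y) - (\<Sum>j<m. g (p j) * indicator (A j) y)"
      unfolding F_def by (simp add: algebra_simps sum_subtractf)
    also have "(\<Sum>j<m. indicator (A j) y * g y) = (\<Sum>j<m. indicator (A j) y) * g y"
      by (simp add: sum_distrib_right)
    finally show ?thesis using S[OF y] by simp
  qed
  have "integral\<^sup>L M F = integral\<^sup>L M (\<lambda>y. g y - (\<Sum>j<m. g (p j) * indicator (A j) y))"
    by (rule Bochner_Integration.integral_cong[OF refl]) (simp add: Fy)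
  also have "\<dots> = integral\<^sup>L M g - (\<Sum>j<m. g (p j) * measure M (A j))"
  proof -
    have ii: "integrable M (\<lambda>y. \<Sum>j<m. g (p j) * indicator (A j) y)"
      by (intro Bochner_Integration.integrable_sum integrable_mult_right integrable_real_indicator)
         (use A in \<open>auto simp: emeasure_eq_measure\<close>)
    have "integral\<^sup>L M (\<lambda>y. \<Sum>j<m. g (p j) * indicator (A j) y) = (\<Sum>j<m. g (p j) * measure M (A j))"
      by (subst Bochner_Integration.integral_sum)
         (use A Asub in \<open>auto intro!: integrable_mult_right integrable_real_indicator
           sum.cong simp: Int_absorb2 emeasure_eq_measure\<close>)
    then show ?thesis using gi ii by (simp add: Bochner_Integration.integral_diff)
  qed
  finally have eq: "integral\<^sup>L M F = integral\<^sup>L M g - (\<Sum>j<m. g (p j) * measure M (A j))" .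
  have "integral\<^sup>L M F \<le> e" by (rule prob_int_le[OF P Fi]) (use Fb in \<open>auto simp: abs_le_iff\<close>)
  moreover have "- e \<le> integral\<^sup>L M F"
  proof (rule prob_int_ge[OF P Fi])
    fix y assume "y \<in> space M" from Fb[OF this] show "- e \<le> F y" by (simp add: abs_le_iff)
  qed
  ultimately show ?thesis using eq by linarith
qed

lemma sum_measure_partition:
  assumes P: "prob_space M" and A: "\<And>j. j < (m::nat) \<Longrightarrow> A j \<in> sets M"
    and S: "\<And>y. y \<in> space M \<Longrightarrow> (\<Sum>j<m. indicator (A j) y) = (1::real)"
  shows "(\<Sum>j<m. measure M (A j)) = 1"
proof -
  interpret prob_space M by (rule P)
  have "integral\<^sup>L M (\<lambda>y. \<Sum>j<m. indicator (A j) y :: real) = (\<Sum>j<m. integral\<^sup>L M (indicator (A j) :: _ \<Rightarrow> real))"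
    by (rule Bochner_Integration.integral_sum) (use A in \<open>auto intro!: integrable_real_indicator simp: emeasure_eq_measure\<close>)
  also have "\<dots> = (\<Sum>j<m. measure M (A j))"
  proof (rule sum.cong[OF refl])
    fix j assume "j \<in> {..<m}"
    then have "A j \<subseteq> space M" using A sets.sets_into_space by auto
    then show "integral\<^sup>L M (indicator (A j) :: _ \<Rightarrow> real) = measure M (A j)"
      by (simp add: Int_absorb2)
  qed
  finally have "(\<Sum>j<m. measure M (A j)) = integral\<^sup>L M (\<lambda>y. \<Sum>j<m. indicator (A j) y :: real)" by simp
  also have "\<dots> = integral\<^sup>L M (\<lambda>y. 1)" by (rule Bochner_Integration.integral_cong) (auto simp: S)
  also have "\<dots> = 1" by (simp add: prob_space)
  finally show ?thesis .
qed

lemma partition_exists: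
  fixes X :: "'a::metric_space set"
  assumes "compact X" "0 < d"
  shows "\<exists>(m::nat) p A. (\<forall>i<m. p i \<in> X) \<and> (\<forall>i<m. A i \<in> sets (restrict_space borel X))
     \<and> (\<forall>y\<in>X. (\<Sum>i<m. indicator (A i) y) = (1::real)) \<and> (\<forall>i<m. \<forall>y\<in>A i. dist y (p i) < d)"
proof -
  have cov: "X \<subseteq> (\<Union>c\<in>X. ball c d)" using assms(2) by auto
  have opn: "\<And>T. T \<in> X \<Longrightarrow> open (ball T d)" by simp
  obtain F where F: "F \<subseteq> X" "finite F" "X \<subseteq> (\<Union>c\<in>F. ball c d)"
    using compactE_image[OF assms(1) opn cov] by blast
  then obtain m :: nat and p where mp: "F = p ` {i. i < m}" using finite_conv_nat_seg_image[THEN iffD1, OF F(2)] by metis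
  define A where "A i = X \<inter> (ball (p i) d - (\<Union>j<i. ball (p j) d))" for i
  have "\<forall>i<m. p i \<in> X" using F mp by auto
  moreover have "\<forall>i<m. A i \<in> sets (restrict_space borel X)"
  proof (intro allI impI)
    fix i
    have "ball (p i) d - (\<Union>j<i. ball (p j) d) \<in> sets borel"
      by (intro sets.Diff borel_open open_ball open_UN) simp
    then show "A i \<in> sets (restrict_space borel X)"
      unfolding sets_restrict_space A_def by (rule imageI)
  qed
  moreover have "\<forall>y\<in>X. (\<Sum>i<m. indicator (A i) y) = (1::real)"
  proof
    fix y assume y: "y \<in> X"
    then obtain j where j: "j < m" "y \<in> ball (p j) d" using F mp by auto
    define i0 where "i0 = (LEAST i. y \<in> ball (p i) d)"
    have i0: "y \<in> ball (p i0) d" "i0 \<le> j" 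
      unfolding i0_def by (rule LeastI[of _ j], rule j(2), rule Least_le, rule j(2))
    have nb: "i < i0 \<Longrightarrow> y \<notin> ball (p i) d" for i unfolding i0_def using not_less_Least by blast
    have "y \<in> A i \<longleftrightarrow> i = i0" for i
    proof
      assume "y \<in> A i"
      then have "y \<in> ball (p i) d" "\<forall>j<i. y \<notin> ball (p j) d" by (auto simp: A_def)
      then show "i = i0" using nb[of i] i0(1) by (cases "i < i0"; cases "i0 < i") auto
    next
      assume "i = i0" then show "y \<in> A i" using y i0 nb by (auto simp: A_def)
    qed
    then have "(\<Sum>i<m. indicator (A i) y) = (\<Sum>i<m. if i = i0 then 1 else (0::real))"
      by (intro sum.cong) (auto simp: indicator_def)
    also have "\<dots> = 1" using i0 j by simp
    finally show "(\<Sum>i<m. indicator (A i) y) = (1::real)" .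
  qed
  moreover have "\<forall>i<m. \<forall>y\<in>A i. dist y (p i) < d" by (auto simp: A_def dist_commute)
  ultimately show ?thesis
    apply (intro exI[of _ m] exI[of _ p] exI[of _ A])
    by blast
qed




lemma W_approx:
  fixes X :: "'a::metric_space set"
  assumes M: "M \<in> borel_prob_measures X" and N: "N \<in> borel_prob_measures X"
    and p: "\<And>i. i < (m::nat) \<Longrightarrow> p i \<in> X"
    and A: "\<And>i. i < m \<Longrightarrow> A i \<in> sets (restrict_space borel X)"
    and S: "\<And>y. y \<in> X \<Longrightarrow> (\<Sum>i<m. indicator (A i) y) = (1::real)"
    and D: "\<And>i y. i < m \<Longrightarrow> y \<in> A i \<Longrightarrow> dist y (p i) < d"
  shows "\<bar>W_inner M N - (\<Sum>i<m. \<Sum>j<m. exp (- dist (p i) (p j)) * measure M (A j) * measure N (A i))\<bar> \<le> 2 * d"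
proof -
  note PM = bpm_facts[OF M] and PN = bpm_facts[OF N]
  define h where "h x = (\<Sum>j<m. exp (- dist x (p j)) * measure M (A j))" for x
  have step1: "\<bar>Zmu M x - h x\<bar> \<le> d" for x
    unfolding Zmu_def h_def
  proof (rule approx_sum[OF PM(1), where B=1])
    show "\<And>j. j < m \<Longrightarrow> A j \<in> sets M" using A PM(2) by simp
    show "\<And>y. y \<in> space M \<Longrightarrow> (\<Sum>j<m. indicator (A j) y) = (1::real)" using S PM(3) by simp
    show "\<bar>exp (- dist x y) - exp (- dist x (p j))\<bar> \<le> d" if "j < m" "y \<in> A j" for j y
      using K_lip[of y x "p j"] D[OF that] by (simp add: dist_commute)
    show "(\<lambda>y. exp (- dist x y)) \<in> borel_measurable M" by (rule bpm_meas[OF M K_cont])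
  qed auto
  have step2: "\<bar>W_inner M N - (\<Sum>i<m. Zmu M (p i) * measure N (A i))\<bar> \<le> d"
    unfolding W_inner_def
  proof (rule approx_sum[OF PN(1), where B=1])
    show "\<And>j. j < m \<Longrightarrow> A j \<in> sets N" using A PN(2) by simp
    show "\<And>y. y \<in> space N \<Longrightarrow> (\<Sum>j<m. indicator (A j) y) = (1::real)" using S PN(3) by simp
    show "\<bar>Zmu M y - Zmu M (p j)\<bar> \<le> d" if "j < m" "y \<in> A j" for j y
      using Zmu_lip[OF M, of y "p j"] D[OF that] by simp
    show "Zmu M \<in> borel_measurable N" by (rule bpm_meas[OF N Zmu_cont[OF M]])
    show "\<And>y. y \<in> space N \<Longrightarrow> \<bar>Zmu M y\<bar> \<le> 1" using Zmu_bounds[OF M] by simp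
  qed
  have sN: "(\<Sum>i<m. measure N (A i)) = 1"
    by (rule sum_measure_partition[OF PN(1)]) (use A PN S in auto)
  have step3: "\<bar>(\<Sum>i<m. Zmu M (p i) * measure N (A i)) - (\<Sum>i<m. h (p i) * measure N (A i))\<bar> \<le> d"
  proof -
    have "\<bar>(\<Sum>i<m. Zmu M (p i) * measure N (A i)) - (\<Sum>i<m. h (p i) * measure N (A i))\<bar>
        = \<bar>\<Sum>i<m. (Zmu M (p i) - h (p i)) * measure N (A i)\<bar>"
      by (simp add: sum_subtractf left_diff_distrib)
    also have "\<dots> \<le> (\<Sum>i<m. \<bar>(Zmu M (p i) - h (p i)) * measure N (A i)\<bar>)" by (rule sum_abs)
    also have "\<dots> \<le> (\<Sum>i<m. d * measure N (A i))"
      by (intro sum_mono) (auto simp: abs_mult intro!: mult_right_mono step1)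
    also have "\<dots> = d" using sN by (simp add: sum_distrib_left[symmetric])
    finally show ?thesis .
  qed
  have eq: "(\<Sum>i<m. h (p i) * measure N (A i))
      = (\<Sum>i<m. \<Sum>j<m. exp (- dist (p i) (p j)) * measure M (A j) * measure N (A i))"
    by (simp add: h_def sum_distrib_right)
  show ?thesis using step2 step3 eq by linarith
qed

lemma half_le: "(x::real) \<le> x / 2 \<Longrightarrow> x \<le> 0" by linarith

lemma pd_arith:
  fixes a b c e d :: real
  shows "- 8 * d \<le> a + b - c - e \<Longrightarrow> c = e \<Longrightarrow> 0 < 2 * c - (a + b) \<Longrightarrow> d = (2 * c - (a + b)) / 16 \<Longrightarrow> False"
  by (simp add: field_simps)

lemma W_sym:
  fixes X :: "'a::metric_space set"
  assumes X: "compact X" and M: "M \<in> borel_prob_measures X" and N: "N \<in> borel_prob_measures X"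
  shows "W_inner M N = W_inner N M"
proof (rule ccontr)
  assume ne: "W_inner M N \<noteq> W_inner N M"
  define d where "d = \<bar>W_inner M N - W_inner N M\<bar> / 8"
  have d: "0 < d" using ne by (simp add: d_def)
  from partition_exists[OF X d] obtain m :: nat and p A where
    P: "\<forall>i<m. p i \<in> X" "\<forall>i<m. A i \<in> sets (restrict_space borel X)"
      "\<forall>y\<in>X. (\<Sum>i<m. indicator (A i) y) = (1::real)" "\<forall>i<m. \<forall>y\<in>A i. dist y (p i) < d" by blast
  define S where "S = (\<Sum>i<m. \<Sum>j<m. exp (- dist (p i) (p j)) * measure M (A j) * measure N (A i))"
  have sw: "(\<Sum>i<m. \<Sum>j<m. exp (- dist (p i) (p j)) * measure N (A j) * measure M (A i)) = S"
    unfolding S_def by (subst sum.swap) (simp add: dist_commute mult_ac)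
  have b1: "\<bar>W_inner M N - S\<bar> \<le> 2 * d" using W_approx[OF M N, of m p A d] P by (simp add: S_def)
  have b2: "\<bar>W_inner N M - S\<bar> \<le> 2 * d" using W_approx[OF N M, of m p A d] P sw by simp
  have "\<bar>W_inner M N - W_inner N M\<bar> \<le> 4 * d" using b1 b2 unfolding abs_le_iff by linarith
  then have "\<bar>W_inner M N - W_inner N M\<bar> \<le> \<bar>W_inner M N - W_inner N M\<bar> / 2" by (simp add: d_def)
  then have "\<bar>W_inner M N - W_inner N M\<bar> \<le> 0" by (rule half_le)
  then show False using ne by simp
qed

lemma measure_pd_eps:
  fixes X :: "'a::metric_space set" and f :: "'a \<Rightarrow> 'b::{real_inner,complete_space}"
  assumes X: "compact X" and f: "sqrt_isometric_embedding X f"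
    and M: "M \<in> borel_prob_measures X" and N: "N \<in> borel_prob_measures X" and d: "0 < d"
  shows "- 8 * d \<le> W_inner N N + W_inner M M - W_inner M N - W_inner N M"
proof -
  from partition_exists[OF X d] obtain m :: nat and p A where
    P: "\<forall>i<m. p i \<in> X" "\<forall>i<m. A i \<in> sets (restrict_space borel X)"
      "\<forall>y\<in>X. (\<Sum>i<m. indicator (A i) y) = (1::real)" "\<forall>i<m. \<forall>y\<in>A i. dist y (p i) < d" by blast
  define K where "K i j = exp (- dist (p i) (p j))" for i j
  define a where "a i = measure M (A i)" for i
  define b where "b i = measure N (A i)" for i
  define S where "S u v = (\<Sum>i<m. \<Sum>j<m. K i j * u j * v i)" for u v
  have e1: "\<bar>W_inner M N - S a b\<bar> \<le> 2 * d" using W_approx[OF M N, of m p A d] P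
    by (simp add: S_def K_def a_def b_def)
  have e2: "\<bar>W_inner N M - S b a\<bar> \<le> 2 * d" using W_approx[OF N M, of m p A d] P
    by (simp add: S_def K_def a_def b_def)
  have e3: "\<bar>W_inner M M - S a a\<bar> \<le> 2 * d" using W_approx[OF M M, of m p A d] P
    by (simp add: S_def K_def a_def b_def)
  have e4: "\<bar>W_inner N N - S b b\<bar> \<le> 2 * d" using W_approx[OF N N, of m p A d] P
    by (simp add: S_def K_def a_def b_def)
  have Keq: "K i j = exp (- ((norm (f (p i) - f (p j)))^2))" if "i < m" "j < m" for i j
  proof -
    have "dist (f (p i)) (f (p j)) = sqrt (dist (p i) (p j))"
      using f P(1) that unfolding sqrt_isometric_embedding_def by blast
    then have "(norm (f (p i) - f (p j)))^2 = dist (p i) (p j)" by (simp add: dist_norm)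
    then show ?thesis by (simp add: K_def)
  qed
  have "S b b + S a a - S a b - S b a = (\<Sum>i<m. \<Sum>j<m. (b i - a i) * (b j - a j) * K i j)"
    by (simp add: S_def sum_subtractf[symmetric] sum.distrib[symmetric] algebra_simps)
  also have "\<dots> = (\<Sum>i<m. \<Sum>j<m. (b i - a i) * (b j - a j) * exp (- ((norm (f (p i) - f (p j)))^2)))"
    by (intro sum.cong refl) (simp add: Keq)
  also have "\<dots> \<ge> 0" by (rule gauss_pd[where v="\<lambda>i. f (p i)"])
  finally have "0 \<le> S b b + S a a - S a b - S b a" .
  then show ?thesis using e1 e2 e3 e4 by linarith
qed

lemma measure_pd:
  fixes X :: "'a::metric_space set" and f :: "'a \<Rightarrow> 'b::{real_inner,complete_space}"
  assumes X: "compact X" and f: "sqrt_isometric_embedding X f"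
    and M: "M \<in> borel_prob_measures X" and N: "N \<in> borel_prob_measures X"
  shows "2 * W_inner M N \<le> W_inner N N + W_inner M M"
proof (rule ccontr)
  assume "\<not> ?thesis"
  then have pos: "0 < 2 * W_inner M N - (W_inner N N + W_inner M M)" by simp
  define d where "d = (2 * W_inner M N - (W_inner N N + W_inner M M)) / 16"
  have "0 < d" using pos by (simp add: d_def)
  from pd_arith[OF measure_pd_eps[OF X f M N this] W_sym[OF X M N] pos d_def] show False .
qed




lemma mixture:
  fixes X :: "'a::metric_space set"
  assumes M: "M \<in> borel_prob_measures X" and p: "p \<in> X" and t: "0 \<le> t" "t \<le> 1"
  defines "Mt \<equiv> measure_pmf (bernoulli_pmf t) \<bind> (\<lambda>b. if b then return (restrict_space borel X) p else M)"
  shows "Mt \<in> borel_prob_measures X"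
    and "\<And>g B. continuous_on X g \<Longrightarrow> (\<And>y. y \<in> X \<Longrightarrow> \<bar>g y\<bar> \<le> B) \<Longrightarrow>
           integral\<^sup>L Mt g = t * g p + (1 - t) * integral\<^sup>L M g"
proof -
  define L where "L = restrict_space borel X"
  note PM = bpm_facts[OF M]
  have spL: "space L = X" by (simp add: L_def space_restrict_space)
  define N where "N b = (if b then return L p else M)" for b
  have Mt: "Mt = measure_pmf (bernoulli_pmf t) \<bind> N" unfolding Mt_def N_def[abs_def] L_def by (rule refl)
  have Nsets: "sets (N b) = sets L" for b using PM by (simp add: N_def L_def)
  have Nprob: "prob_space (N b)" for b
    using PM p spL by (auto simp: N_def intro: prob_space_return)
  have Nmeas: "N \<in> measurable (measure_pmf (bernoulli_pmf t)) (subprob_algebra L)"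
    using Nsets Nprob by (auto simp: space_subprob_algebra prob_space_imp_subprob_space)
  have sets_Mt: "sets Mt = sets L" unfolding Mt by (rule sets_bind) (auto simp: Nsets)
  have prob_Mt: "prob_space Mt" unfolding Mt
    by (rule prob_space.prob_space_bind[OF prob_space_measure_pmf _ Nmeas]) (auto simp: Nprob)
  show "Mt \<in> borel_prob_measures X"
    using sets_Mt prob_Mt by (simp add: borel_prob_measures_def L_def)
  fix g :: "'a \<Rightarrow> real" and B
  assume gc: "continuous_on X g" and gB: "\<And>y. y \<in> X \<Longrightarrow> \<bar>g y\<bar> \<le> B"
  have gm: "g \<in> borel_measurable L" unfolding L_def by (rule borel_measurable_continuous_on_restrict[OF gc])
  have "integral\<^sup>L Mt g = (\<integral>b. integral\<^sup>L (N b) g \<partial>measure_pmf (bernoulli_pmf t))"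
    unfolding Mt
  proof (rule integral_bind[OF gm _ Nmeas])
    show "\<And>x. x \<in> space L \<Longrightarrow> \<bar>g x\<bar> \<le> B" using gB spL by simp
    show "finite_measure (measure_pmf (bernoulli_pmf t))" by (rule prob_space.finite_measure[OF prob_space_measure_pmf])
    show "AE x in measure_pmf (bernoulli_pmf t). emeasure (N x) (space (N x)) \<le> ennreal 1"
      using Nprob by (auto intro!: AE_I2 simp: prob_space.emeasure_space_1)
  qed
  also have "\<dots> = integral\<^sup>L (N True) g * t + integral\<^sup>L (N False) g * (1 - t)"
    using t by simp
  also have "integral\<^sup>L (N True) g = g p"
    using p spL gm by (simp add: N_def integral_return)
  finally show "integral\<^sup>L Mt g = t * g p + (1 - t) * integral\<^sup>L M g" by (simp add: N_def)
qed


lemma open_Int_sets: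
  assumes "M \<in> borel_prob_measures X" "open U"
  shows "U \<inter> X \<in> sets M"
proof -
  have "X \<inter> U \<in> (\<inter>) X ` sets borel" using assms(2) by (intro imageI borel_open)
  then show ?thesis using bpm_facts(2)[OF assms(1)] by (simp add: sets_restrict_space Int_commute)
qed

lemma inv_le_rev:
  fixes a b :: real
  assumes "0 < a" "0 < b" "1 / a \<le> 1 / b"
  shows "b \<le> a"
  using assms by (simp add: field_simps)

lemma mix_arith:
  fixes Z W t :: real
  assumes "0 \<le> Z" "W \<le> 1" "Z < W" "0 < t" "t \<le> (W - Z) / 2"
    and le: "W \<le> t * (t + (1 - t) * Z) + (1 - t) * (t * Z + (1 - t) * W)"
  shows False
proof -
  define q where "q = t * (1 - 2 * Z + W)"
  have eq: "t * (t + (1 - t) * Z) + (1 - t) * (t * Z + (1 - t) * W) - W = t * (2 * (Z - W) + q)"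
    by (simp add: q_def algebra_simps power2_eq_square)
  have "q \<le> t * 2" unfolding q_def using assms by (intro mult_left_mono) auto
  moreover have "t * 2 \<le> W - Z" using assms(5) by simp
  ultimately have "2 * (Z - W) + q < 0" using assms(3) by (smt (verit))
  then have "t * (2 * (Z - W) + q) < 0" using assms(4) by (simp add: mult_pos_neg)
  then show False using eq le by linarith
qed

theorem proposition2p4:
  fixes X :: "'a::metric_space set" and f :: "'a \<Rightarrow> 'b::{real_inner,complete_space}"
    and M :: "'a measure"
  assumes "compact X"
    and "sqrt_isometric_embedding X f"
    and "M \<in> borel_prob_measures X"
  shows "(diversity_maximizing X M \<longleftrightarrow>
           (\<exists>C>0. (\<forall>x\<in>msupp M. Zmu M x = C) \<and> (\<forall>x\<in>X. Zmu M x \<ge> C)))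
       \<and> (\<forall>C. C > 0 \<and> (\<forall>x\<in>msupp M. Zmu M x = C) \<and> (\<forall>x\<in>X. Zmu M x \<ge> C)
              \<longrightarrow> C = 1 / max_diversity X)"
proof -
  note PM = bpm_facts[OF assms(3)]
  interpret prob_space M by (rule PM(1))
  define W0 where "W0 = W_inner M M"
  have "bounded X" by (rule compact_imp_bounded[OF assms(1)])
  then obtain D where D: "\<And>x y. x \<in> X \<Longrightarrow> y \<in> X \<Longrightarrow> dist x y \<le> D"
    unfolding bounded_two_points by blast
  have Wlow: "exp (- D) \<le> W_inner N N" if "N \<in> borel_prob_measures X" for N
    by (rule W_bounds(1)[OF that that D])
  have Wup: "W_inner N N \<le> 1" if "N \<in> borel_prob_measures X" for N
    by (rule W_bounds(2)[OF that that D])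
  have Wpos: "0 < W_inner N N" if "N \<in> borel_prob_measures X" for N
    using Wlow[OF that] by (meson exp_gt_zero less_le_trans)
  have W0pos: "0 < W0" unfolding W0_def by (rule Wpos[OF assms(3)])
  have bdd: "bdd_above ((\<lambda>N. 1 / W_inner N N) ` borel_prob_measures X)"
  proof (rule bdd_aboveI2)
    fix N assume N: "N \<in> borel_prob_measures X"
    have "1 / W_inner N N \<le> 1 / exp (- D)"
      using Wlow[OF N] Wpos[OF N] by (intro divide_left_mono) auto
    moreover have "1 / exp (- D) = exp D" by (simp add: exp_minus divide_inverse)
    ultimately show "1 / W_inner N N \<le> exp D" by simp
  qed
  have upper: "1 / W_inner N N \<le> max_diversity X" if "N \<in> borel_prob_measures X" for N
    unfolding max_diversity_def by (rule cSUP_upper[OF that bdd])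
  have Zc: "continuous_on A (Zmu M)" for A by (rule Zmu_cont[OF assms(3)])
  have Zm: "Zmu M \<in> borel_measurable M" by (rule bpm_meas[OF assms(3) Zc])

  have key1: "W0 = C" if h1: "\<forall>x\<in>msupp M. Zmu M x = C" and h2: "\<forall>x\<in>X. C \<le> Zmu M x" for C
  proof -
    define S where "S n = X \<inter> {x. C + 1 / real (Suc n) \<le> Zmu M x}" for n
    have null: "AE y in M. y \<notin> S n" for n
    proof -
      have "closed {x. C + 1 / real (Suc n) \<le> Zmu M x}"
        by (rule closed_Collect_le[OF continuous_on_const Zc])
      then have cS: "compact (S n)" unfolding S_def by (rule compact_Int_closed[OF assms(1)])
      have ex: "\<exists>U. open U \<and> x \<in> U \<and> emeasure M (U \<inter> X) = 0" if x: "x \<in> S n" for x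
      proof -
        have xX: "x \<in> X" using x by (simp add: S_def)
        have "C + 1 / real (Suc n) \<le> Zmu M x" using x by (simp add: S_def)
        moreover have "0 < 1 / real (Suc n)" by simp
        ultimately have "C < Zmu M x" by (smt (verit))
        then have "x \<notin> msupp M" using h1 by auto
        then obtain U where "open U" "x \<in> U" "\<not> 0 < emeasure M (U \<inter> space M)"
          using xX PM(3) unfolding msupp_def by auto
        then show ?thesis using PM(3) by (auto simp: not_gr_zero)
      qed
      have "\<forall>x\<in>S n. \<exists>U. open U \<and> x \<in> U \<and> emeasure M (U \<inter> X) = 0" using ex by blast
      from bchoice[OF this] obtain U where U0: "\<forall>x\<in>S n. open (U x) \<and> x \<in> U x \<and> emeasure M (U x \<inter> X) = 0"
        by (elim exE) (rule that)
      then have U: "\<And>x. x \<in> S n \<Longrightarrow> open (U x) \<and> x \<in> U x \<and> emeasure M (U x \<inter> X) = 0" by blast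
      have opU: "\<And>x. x \<in> S n \<Longrightarrow> open (U x)" using U by blast
      have covU: "S n \<subseteq> (\<Union>x\<in>S n. U x)" using U by blast
      obtain F where F: "F \<subseteq> S n" "finite F" "S n \<subseteq> (\<Union>x\<in>F. U x)"
        using compactE_image[OF cS opU covU] by blast
      have "AE y in M. \<forall>x\<in>F. y \<notin> U x \<inter> X"
      proof (rule AE_finite_allI[OF F(2)])
        fix x assume "x \<in> F"
        then have x: "x \<in> S n" using F by auto
        have "U x \<inter> X \<in> sets M" by (rule open_Int_sets[OF assms(3)]) (use U[OF x] in blast)
        moreover have "emeasure M (U x \<inter> X) = 0" using U[OF x] by blast
        ultimately have "U x \<inter> X \<in> null_sets M" by (intro null_setsI)
        then show "AE y in M. y \<notin> U x \<inter> X" by (rule AE_not_in)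
      qed
      then show ?thesis
      proof (rule AE_mp[OF _ AE_I2], intro impI)
        fix y assume "\<forall>x\<in>F. y \<notin> U x \<inter> X"
        then show "y \<notin> S n" using F(3) by (auto simp: S_def)
      qed
    qed
    then have "AE y in M. \<forall>n. y \<notin> S n" by (simp add: AE_all_countable)
    then have ae: "AE y in M. Zmu M y = C"
    proof (rule AE_mp[OF _ AE_I2], intro impI)
      fix y assume y: "y \<in> space M" and ns: "\<forall>n. y \<notin> S n"
      have yX: "y \<in> X" using y PM(3) by simp
      have ge: "C \<le> Zmu M y" using h2 yX by auto
      show "Zmu M y = C"
      proof (rule ccontr)
        assume "Zmu M y \<noteq> C"
        then have "0 < Zmu M y - C" using ge by simp
        then obtain n where "inverse (real (Suc n)) < Zmu M y - C" using reals_Archimedean by blast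
        then have "1 / real (Suc n) < Zmu M y - C" by (simp add: inverse_eq_divide)
        then have "C + 1 / real (Suc n) \<le> Zmu M y" by (smt (verit))
        then have "y \<in> S n" using yX by (simp add: S_def)
        then show False using ns by blast
      qed
    qed
    have "W0 = integral\<^sup>L M (Zmu M)" by (simp add: W0_def W_inner_def)
    also have "\<dots> = integral\<^sup>L M (\<lambda>y. C)"
      by (rule integral_cong_AE[OF Zm borel_measurable_const ae])
    also have "\<dots> = C" by (simp add: prob_space)
    finally show ?thesis .
  qed

  have key2: "diversity_maximizing X M \<and> max_diversity X = 1 / C"
    if C0: "0 < C" and h1: "\<forall>x\<in>msupp M. Zmu M x = C" and h2: "\<forall>x\<in>X. C \<le> Zmu M x" for C
  proof -
    have W0C: "W0 = C" by (rule key1[OF h1 h2])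
    have geC: "C \<le> W_inner N N" if N: "N \<in> borel_prob_measures X" for N
    proof -
      have "2 * W_inner M N \<le> W_inner N N + W_inner M M"
        by (rule measure_pd[OF assms(1) assms(2) assms(3) N])
      moreover have "C \<le> W_inner M N" unfolding W_inner_def
        by (rule prob_int_ge[OF bpm_facts(1)[OF N] Zmu_int[OF assms(3) N]]) (use h2 bpm_facts(3)[OF N] in auto)
      ultimately show ?thesis using W0C W0_def by linarith
    qed
    have md: "max_diversity X = 1 / C"
      unfolding max_diversity_def
    proof (rule cSup_eq_maximum)
      show "1 / C \<in> (\<lambda>N. 1 / W_inner N N) ` borel_prob_measures X"
        using assms(3) W0C W0_def by force
      fix z assume "z \<in> (\<lambda>N. 1 / W_inner N N) ` borel_prob_measures X"
      then obtain N where N: "N \<in> borel_prob_measures X" and z: "z = 1 / W_inner N N" by blast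
      show "z \<le> 1 / C" unfolding z using geC[OF N] C0 by (intro divide_left_mono) auto
    qed
    then show ?thesis using W0C unfolding diversity_maximizing_def W0_def using assms(3) by simp
  qed

  have key3: "(\<forall>x\<in>msupp M. Zmu M x = W0) \<and> (\<forall>x\<in>X. W0 \<le> Zmu M x)"
    if dm: "diversity_maximizing X M"
  proof -
    have md: "max_diversity X = 1 / W0" using dm by (simp add: diversity_maximizing_def W0_def)
    have Zge: "W0 \<le> Zmu M p" if p: "p \<in> X" for p
    proof (rule ccontr)
      assume "\<not> W0 \<le> Zmu M p"
      then have lt: "Zmu M p < W0" by simp
      define Z where "Z = Zmu M p"
      define t where "t = min (1/2) ((W0 - Z) / 2)"
      have t1: "0 < t" using lt by (simp add: t_def Z_def)
      have t2: "t \<le> 1/2" unfolding t_def by (rule min.cobounded1)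
      have t3: "t \<le> (W0 - Z) / 2" unfolding t_def by (rule min.cobounded2)
      note t = t1 t2 t3
      define Mt where "Mt = measure_pmf (bernoulli_pmf t) \<bind> (\<lambda>b. if b then return (restrict_space borel X) p else M)"
      have Mt: "Mt \<in> borel_prob_measures X"
        unfolding Mt_def by (rule mixture(1)[OF assms(3) p]) (use t in auto)
      have I: "integral\<^sup>L Mt g = t * g p + (1 - t) * integral\<^sup>L M g"
        if "continuous_on X g" "\<And>y. y \<in> X \<Longrightarrow> \<bar>g y\<bar> \<le> 1" for g
        unfolding Mt_def by (rule mixture(2)[OF assms(3) p _ _ that]) (use t in auto)
      have ZMt: "Zmu Mt y = t * exp (- dist y p) + (1 - t) * Zmu M y" for y
        unfolding Zmu_def by (rule I) (auto intro: K_cont)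
      have ZMtp: "Zmu Mt p = t + (1 - t) * Z" using ZMt[of p] by (simp add: Z_def)
      have intM: "integral\<^sup>L M (Zmu Mt) = t * Z + (1 - t) * W0"
      proof -
        have e: "(\<lambda>y. exp (- dist y p)) = (\<lambda>y. exp (- dist p y))" by (simp add: dist_commute)
        have i1: "integrable M (\<lambda>y. exp (- dist y p))" unfolding e by (rule K_int[OF assms(3)])
        have i2: "integrable M (Zmu M)" by (rule Zmu_int[OF assms(3) assms(3)])
        have "integral\<^sup>L M (Zmu Mt) = integral\<^sup>L M (\<lambda>y. t * exp (- dist y p) + (1 - t) * Zmu M y)"
          by (rule arg_cong[where f="integral\<^sup>L M"], rule ext, rule ZMt)
        also have "\<dots> = t * integral\<^sup>L M (\<lambda>y. exp (- dist y p)) + (1 - t) * integral\<^sup>L M (Zmu M)"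
          using i1 i2 by simp
        also have "integral\<^sup>L M (\<lambda>y. exp (- dist y p)) = Z" unfolding e Z_def Zmu_def ..
        finally show ?thesis by (simp add: W0_def W_inner_def)
      qed
      have WMt: "W_inner Mt Mt = t * (t + (1 - t) * Z) + (1 - t) * (t * Z + (1 - t) * W0)"
      proof -
        have "W_inner Mt Mt = t * Zmu Mt p + (1 - t) * integral\<^sup>L M (Zmu Mt)"
          unfolding W_inner_def
          by (rule I) (use Zmu_bounds[OF Mt] Zmu_cont[OF Mt] in auto)
        then show ?thesis using ZMtp intM by simp
      qed
      have "1 / W_inner Mt Mt \<le> 1 / W0" using upper[OF Mt] md by simp
      then have "W0 \<le> W_inner Mt Mt" by (rule inv_le_rev[OF Wpos[OF Mt] W0pos])
      moreover have "0 \<le> Z" using Zmu_bounds(1)[OF assms(3)] by (simp add: Z_def)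
      moreover have "W0 \<le> 1" using Wup[OF assms(3)] by (simp add: W0_def)
      ultimately show False using mix_arith[of Z W0 t] t lt WMt by (simp add: Z_def)
    qed
    have "Zmu M x = W0" if x: "x \<in> msupp M" for x
    proof (rule ccontr)
      assume ne: "Zmu M x \<noteq> W0"
      have xX: "x \<in> X" using x PM(3) by (simp add: msupp_def)
      then have gt: "W0 < Zmu M x" using Zge[OF xX] ne by simp
      define e where "e = (Zmu M x - W0) / 2"
      have e: "0 < e" using gt by (simp add: e_def)
      define U where "U = {y. W0 + e < Zmu M y}"
      have oU: "open U" unfolding U_def by (rule open_Collect_less[OF continuous_on_const Zc])
      have "W0 + e < Zmu M x" using gt unfolding e_def by argo
      then have "x \<in> U" by (simp add: U_def)
      then have "0 < emeasure M (U \<inter> space M)" using x oU by (simp add: msupp_def)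
      then have mpos: "0 < measure M (U \<inter> X)" using PM(3) by (simp add: emeasure_eq_measure)
      have UX: "U \<inter> X \<in> sets M" by (rule open_Int_sets[OF assms(3) oU])
      have ii: "integrable M (\<lambda>y. W0 + e * indicator (U \<inter> X) y)"
        using UX by (intro Bochner_Integration.integrable_add integrable_mult_right integrable_real_indicator)
                    (auto simp: emeasure_eq_measure)
      have "integral\<^sup>L M (\<lambda>y. W0 + e * indicator (U \<inter> X) y) \<le> integral\<^sup>L M (Zmu M)"
      proof (rule integral_mono[OF ii Zmu_int[OF assms(3) assms(3)]])
        fix y assume y: "y \<in> space M"
        then have yX: "y \<in> X" using PM(3) by simp
        show "W0 + e * indicator (U \<inter> X) y \<le> Zmu M y"
          using Zge[OF yX] yX by (cases "y \<in> U") (auto simp: U_def indicator_def)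
      qed
      moreover have "integral\<^sup>L M (\<lambda>y. W0 + e * indicator (U \<inter> X) y) = W0 + e * measure M (U \<inter> X)"
        using UX PM(3) by (subst Bochner_Integration.integral_add)
          (auto simp: emeasure_eq_measure prob_space Int_absorb2 intro!: integrable_real_indicator)
      moreover have "integral\<^sup>L M (Zmu M) = W0" by (simp add: W0_def W_inner_def)
      moreover have "0 < e * measure M (U \<inter> X)" using e mpos by simp
      ultimately show False by linarith
    qed
    then show ?thesis using Zge by blast
  qed

  show ?thesis
  proof (intro conjI allI impI iffI)
    assume "diversity_maximizing X M"
    then show "\<exists>C>0. (\<forall>x\<in>msupp M. Zmu M x = C) \<and> (\<forall>x\<in>X. Zmu M x \<ge> C)"
      using key3 W0pos by blast
  next
    assume "\<exists>C>0. (\<forall>x\<in>msupp M. Zmu M x = C) \<and> (\<forall>x\<in>X. Zmu M x \<ge> C)"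
    then show "diversity_maximizing X M" using key2 by blast
  next
    fix C assume h: "C > 0 \<and> (\<forall>x\<in>msupp M. Zmu M x = C) \<and> (\<forall>x\<in>X. Zmu M x \<ge> C)"
    then have "max_diversity X = 1 / C" using key2 by blast
    then show "C = 1 / max_diversity X" by simp
  qed
qed


end
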